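(* Let $P$ be a rooted forest on $[n]$ with natural labeling and let $\mathcal{M}^{\hat\partial}$ be the monoid of maps $\mathcal{L}(P)\to\mathcal{L}(P)$ generated by $\hat\partial_1,\dots,\hat\partial_n$. For every $x\in\mathcal{M}^{\hat\partial}$, the set $I_x$ is an upper set of $P$; more precisely, $I_x=\operatorname{Rfactor}(e)$ for some idempotent $e\in\mathcal{M}^{\hat\partial}$.
   Context: A rooted forest is a disjoint union of rooted trees, a rooted tree being a connected finite poset in which each element is covered by at most one element. $\mathcal{L}(P)=\{\pi\in S_n : i\prec j \Rightarrow \pi^{-1}_i<\pi^{-1}_j\}$ in one-line notation. $\pi\tau_i$ ($1\le i<n$) swaps $\pi_i,\pi_{i+1}$ if incomparable and is $\pi$ otherwise; $\partial_j=\tau_j\cdots\tau_{n-1}$; $\pi\hat\partial_i=\pi\partial_{\pi^{-1}_i}$. Maps act on the right, $\pi(xy)=(\pi x)y$; the monoid contains the identity. $\operatorname{im}(x)=\{\pi x:\pi\in\mathcal{L}(P)\}$; $\operatorname{rfactor}(x)$ is the longest word that is a common suffix of all elements of $\operatorname{im}(x)$; $\operatorname{Rfactor}(x)$ is its set of letters; $I_x=\{i\in[n]:\hat\partial_i x=x\}$. An upper set $S$ satisfies $a\in S,\ b\succeq a\Rightarrow b\in S$. *)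

theory Defs
  imports Main "HOL-Library.Sublist"
begin

definition poset_on :: "nat \<Rightarrow> (nat \<Rightarrow> nat \<Rightarrow> bool) \<Rightarrow> bool" where
  "poset_on n le \<longleftrightarrow>
     (\<forall>a b. le a b \<longrightarrow> a \<in> {1..n} \<and> b \<in> {1..n}) \<and>
     (\<forall>a\<in>{1..n}. le a a) \<and>
     (\<forall>a b. le a b \<longrightarrow> le b a \<longrightarrow> a = b) \<and>
     (\<forall>a b c. le a b \<longrightarrow> le b c \<longrightarrow> le a c)"

definition strict :: "(nat \<Rightarrow> nat \<Rightarrow> bool) \<Rightarrow> nat \<Rightarrow> nat \<Rightarrow> bool" where
  "strict le a b \<longleftrightarrow> le a b \<and> a \<noteq> b"

definition covers :: "(nat \<Rightarrow> nat \<Rightarrow> bool) \<Rightarrow> nat \<Rightarrow> nat \<Rightarrow> bool" where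
  "covers le a b \<longleftrightarrow> strict le a b \<and> \<not> (\<exists>c. strict le a c \<and> strict le c b)"

definition rooted_forest :: "nat \<Rightarrow> (nat \<Rightarrow> nat \<Rightarrow> bool) \<Rightarrow> bool" where
  "rooted_forest n le \<longleftrightarrow> poset_on n le \<and>
     (\<forall>a\<in>{1..n}. \<forall>b c. covers le a b \<longrightarrow> covers le a c \<longrightarrow> b = c)"

definition natural_labeling :: "nat \<Rightarrow> (nat \<Rightarrow> nat \<Rightarrow> bool) \<Rightarrow> bool" where
  "natural_labeling n le \<longleftrightarrow> (\<forall>i j. strict le i j \<longrightarrow> i < j)"

definition comparable :: "(nat \<Rightarrow> nat \<Rightarrow> bool) \<Rightarrow> nat \<Rightarrow> nat \<Rightarrow> bool" where
  "comparable le a b \<longleftrightarrow> le a b \<or> le b a"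

text \<open>Permutations in one-line notation are lists; list index k (0-based) is position k+1.\<close>
definition lin_ext :: "nat \<Rightarrow> (nat \<Rightarrow> nat \<Rightarrow> bool) \<Rightarrow> nat list set" where
  "lin_ext n le = {\<pi>. length \<pi> = n \<and> distinct \<pi> \<and> set \<pi> = {1..n} \<and>
      (\<forall>k l. k < n \<longrightarrow> l < n \<longrightarrow> strict le (\<pi> ! k) (\<pi> ! l) \<longrightarrow> k < l)}"

text \<open>1-based position of letter i in \<pi>, i.e. \<pi>^{-1}_i.\<close>
definition posn :: "nat list \<Rightarrow> nat \<Rightarrow> nat" where
  "posn \<pi> i = (THE k. k < length \<pi> \<and> \<pi> ! k = i) + 1"

text \<open>\<pi>\<tau>_i (1-based i): swap \<pi>_i, \<pi>_{i+1} if incomparable.\<close>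
definition tau :: "(nat \<Rightarrow> nat \<Rightarrow> bool) \<Rightarrow> nat \<Rightarrow> nat list \<Rightarrow> nat list" where
  "tau le i \<pi> = (if 1 \<le> i \<and> i < length \<pi> \<and> \<not> comparable le (\<pi> ! (i - 1)) (\<pi> ! i)
                  then \<pi>[i - 1 := \<pi> ! i, i := \<pi> ! (i - 1)] else \<pi>)"

text \<open>\<pi>\<partial>_j = \<pi>\<tau>_j\<tau>_{j+1}...\<tau>_{n-1} (right action: \<tau>_j applied first).\<close>
definition pd :: "nat \<Rightarrow> (nat \<Rightarrow> nat \<Rightarrow> bool) \<Rightarrow> nat \<Rightarrow> nat list \<Rightarrow> nat list" where
  "pd n le j \<pi> = fold (tau le) [j..<n] \<pi>"

definition hatd :: "nat \<Rightarrow> (nat \<Rightarrow> nat \<Rightarrow> bool) \<Rightarrow> nat \<Rightarrow> nat list \<Rightarrow> nat list" where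
  "hatd n le i \<pi> = pd n le (posn \<pi> i) \<pi>"

text \<open>Monoid generated by hatd_1..hatd_n (maps act on the right: \<pi>(x y) = (\<pi> x) y,
  so the product x\<cdot>hatd_i is the function hatd_i \<circ> x).\<close>
inductive_set hatd_monoid :: "nat \<Rightarrow> (nat \<Rightarrow> nat \<Rightarrow> bool) \<Rightarrow> (nat list \<Rightarrow> nat list) set"
  for n le where
  idI: "id \<in> hatd_monoid n le"
| stepI: "x \<in> hatd_monoid n le \<Longrightarrow> i \<in> {1..n} \<Longrightarrow> (hatd n le i \<circ> x) \<in> hatd_monoid n le"

definition im :: "nat \<Rightarrow> (nat \<Rightarrow> nat \<Rightarrow> bool) \<Rightarrow> (nat list \<Rightarrow> nat list) \<Rightarrow> nat list set" where
  "im n le x = x ` lin_ext n le"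

definition rfactor :: "nat \<Rightarrow> (nat \<Rightarrow> nat \<Rightarrow> bool) \<Rightarrow> (nat list \<Rightarrow> nat list) \<Rightarrow> nat list" where
  "rfactor n le x = (THE w. (\<forall>v\<in>im n le x. suffix w v) \<and>
      (\<forall>w'. (\<forall>v\<in>im n le x. suffix w' v) \<longrightarrow> length w' \<le> length w))"

definition Rfactor :: "nat \<Rightarrow> (nat \<Rightarrow> nat \<Rightarrow> bool) \<Rightarrow> (nat list \<Rightarrow> nat list) \<Rightarrow> nat set" where
  "Rfactor n le x = set (rfactor n le x)"

text \<open>I_x = {i. \<hat>\<partial>_i x = x}, equality of maps on L(P); (\<hat>\<partial>_i x) applies \<hat>\<partial>_i first.\<close>
definition I_set :: "nat \<Rightarrow> (nat \<Rightarrow> nat \<Rightarrow> bool) \<Rightarrow> (nat list \<Rightarrow> nat list) \<Rightarrow> nat set" where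
  "I_set n le x = {i \<in> {1..n}. \<forall>\<pi>\<in>lin_ext n le. x (hatd n le i \<pi>) = x \<pi>}"

definition idempotent_on :: "nat list set \<Rightarrow> (nat list \<Rightarrow> nat list) \<Rightarrow> bool" where
  "idempotent_on L e \<longleftrightarrow> (\<forall>\<pi>\<in>L. e (e \<pi>) = e \<pi>)"

definition upper_set :: "nat \<Rightarrow> (nat \<Rightarrow> nat \<Rightarrow> bool) \<Rightarrow> nat set \<Rightarrow> bool" where
  "upper_set n le S \<longleftrightarrow> S \<subseteq> {1..n} \<and> (\<forall>a b. a \<in> S \<longrightarrow> le a b \<longrightarrow> b \<in> S)"

end

theory Submission
  imports Defs
begin



fun bubble :: "(nat \<Rightarrow> nat \<Rightarrow> bool) \<Rightarrow> nat \<Rightarrow> nat list \<Rightarrow> nat list" where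
  "bubble le c [] = [c]"
| "bubble le c (d # ws) = (if comparable le c d then c # bubble le d ws else d # bubble le c ws)"

definition R :: "(nat \<Rightarrow> nat \<Rightarrow> bool) \<Rightarrow> nat \<Rightarrow> nat \<Rightarrow> bool" where
  "R le a b \<longleftrightarrow> \<not> strict le b a"

lemma bubble_set: "set (bubble le c xs) = set (c # xs)"
  by (induction xs arbitrary: c) auto

lemma bubble_length: "length (bubble le c xs) = Suc (length xs)"
  by (induction xs arbitrary: c) auto

lemma bubble_distinct: "distinct (c # xs) \<Longrightarrow> distinct (bubble le c xs)"
  by (induction xs arbitrary: c) (auto simp: bubble_set)

lemma bubble_nonempty: "bubble le c xs \<noteq> []"
  by (cases xs) auto

lemma bubble_sorted: "sorted_wrt (R le) (c # xs) \<Longrightarrow> sorted_wrt (R le) (bubble le c xs)"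
proof (induction xs arbitrary: c)
  case Nil then show ?case by simp
next
  case (Cons d ws)
  show ?case
  proof (cases "comparable le c d")
    case True
    then show ?thesis using Cons by (auto simp: bubble_set)
  next
    case False
    then have "R le d c" unfolding R_def strict_def comparable_def by auto
    then show ?thesis using Cons False by (auto simp: bubble_set)
  qed
qed

lemma bubble_append:
  "bubble le c (xs @ ys) = butlast (bubble le c xs) @ bubble le (last (bubble le c xs)) ys"
proof (induction xs arbitrary: c)
  case Nil then show ?case by simp
next
  case (Cons d ws)
  have ne: "bubble le x ws \<noteq> []" for x by (rule bubble_nonempty)
  show ?case using Cons.IH ne by (simp add: butlast_append)
qed

lemma bubble_noncomp: "\<forall>x\<in>set xs. \<not> comparable le c x \<Longrightarrow> bubble le c xs = xs @ [c]"
  by (induction xs arbitrary: c) auto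

lemma bubble_chain:
  "\<forall>x\<in>set (c # xs). \<forall>y\<in>set (c # xs). comparable le x y \<Longrightarrow> bubble le c xs = c # xs"
  by (induction xs arbitrary: c) auto

lemma comp_R_le: "comparable le c d \<Longrightarrow> R le c d \<Longrightarrow> c \<noteq> d \<Longrightarrow> le c d"
  unfolding comparable_def R_def strict_def by auto

lemma bubble_last:
  assumes trans: "\<And>a b c. le a b \<Longrightarrow> le b c \<Longrightarrow> le a c"
  shows "sorted_wrt (R le) (c # xs) \<Longrightarrow> distinct (c # xs) \<Longrightarrow>
    last (bubble le c xs) = c \<or> le c (last (bubble le c xs))"
proof (induction xs arbitrary: c)
  case Nil then show ?case by simp
next
  case (Cons d ws)
  show ?case
  proof (cases "comparable le c d")
    case True
    then have "le c d" using Cons.prems comp_R_le by auto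
    moreover have "last (bubble le d ws) = d \<or> le d (last (bubble le d ws))"
      using Cons by auto
    ultimately show ?thesis using True by (auto simp: bubble_nonempty intro: trans)
  next
    case False
    then show ?thesis using Cons by (auto simp: bubble_nonempty)
  qed
qed

lemma bubble_filter:
  assumes up: "\<forall>a b. a \<in> B \<longrightarrow> le a b \<longrightarrow> b \<in> B"
  shows "c \<in> B \<Longrightarrow> sorted_wrt (R le) (c # xs) \<Longrightarrow> distinct (c # xs) \<Longrightarrow>
    filter (\<lambda>x. x \<notin> B) (bubble le c xs) = filter (\<lambda>x. x \<notin> B) xs"
proof (induction xs arbitrary: c)
  case Nil then show ?case by simp
next
  case (Cons d ws)
  show ?case
  proof (cases "comparable le c d")
    case True
    then have "le c d" using Cons.prems comp_R_le by auto
    then have "d \<in> B" using up Cons.prems by blast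
    then show ?thesis using Cons True by auto
  next
    case False
    then show ?thesis using Cons by auto
  qed
qed

lemma fold_tau_bubble:
  "fold (tau le) [Suc (length p) ..< Suc (length p) + length s] (p @ c # s) = p @ bubble le c s"
proof (induction s arbitrary: p c)
  case Nil then show ?case by simp
next
  case (Cons d ws)
  have up: "[Suc (length p) ..< Suc (length p) + length (d # ws)] =
            Suc (length p) # [Suc (length (p @ [d])) ..< Suc (length (p @ [d])) + length ws]"
  proof -
    have "Suc (length p) < Suc (length p) + length (d # ws)" by simp
    then have "[Suc (length p) ..< Suc (length p) + length (d # ws)] =
       Suc (length p) # [Suc (Suc (length p)) ..< Suc (length p) + length (d # ws)]"
      by (rule upt_conv_Cons)
    then show ?thesis by simp
  qed
  have up2: "[Suc (length (p @ [d])) ..< Suc (length (p @ [d])) + length ws] =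
             [Suc (length (p @ [c])) ..< Suc (length (p @ [c])) + length ws]" by simp
  show ?case
  proof (cases "comparable le c d")
    case True
    have "tau le (Suc (length p)) (p @ c # d # ws) = (p @ [c]) @ d # ws"
      using True by (simp add: tau_def nth_append)
    then show ?thesis using Cons.IH[of "p @ [c]" d] True up up2 by simp
  next
    case False
    have "tau le (Suc (length p)) (p @ c # d # ws) = (p @ [d]) @ c # ws"
      using False by (simp add: tau_def nth_append list_update_append)
    then show ?thesis using Cons.IH[of "p @ [d]" c] False up by simp
  qed
qed

lemma posn_split: "distinct (p @ i # s) \<Longrightarrow> posn (p @ i # s) i = Suc (length p)"
proof -
  assume d: "distinct (p @ i # s)"
  have "(THE k. k < length (p @ i # s) \<and> (p @ i # s) ! k = i) = length p"
  proof (rule the_equality)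
    show "length p < length (p @ i # s) \<and> (p @ i # s) ! length p = i" by simp
  next
    fix k assume k: "k < length (p @ i # s) \<and> (p @ i # s) ! k = i"
    then show "k = length p"
      using d nth_eq_iff_index_eq[OF d, of k "length p"] by auto
  qed
  then show ?thesis unfolding posn_def by simp
qed

lemma hatd_split:
  assumes "distinct (p @ i # s)" "length (p @ i # s) = n"
  shows "hatd n le i (p @ i # s) = p @ bubble le i s"
proof -
  have "n = Suc (length p) + length s" using assms by simp
  then show ?thesis unfolding hatd_def pd_def using posn_split[OF assms(1)] fold_tau_bubble
    by simp
qed




locale FF =
  fixes n :: nat and le :: "nat \<Rightarrow> nat \<Rightarrow> bool"
  assumes forest: "rooted_forest n le" and natl: "natural_labeling n le"
begin

lemma poset: "poset_on n le" using forest unfolding rooted_forest_def by simp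

lemma le_dom: "le a b \<Longrightarrow> a \<in> {1..n} \<and> b \<in> {1..n}"
  using poset unfolding poset_on_def by blast
lemma le_refl: "a \<in> {1..n} \<Longrightarrow> le a a"
  using poset unfolding poset_on_def by blast
lemma le_antisym: "le a b \<Longrightarrow> le b a \<Longrightarrow> a = b"
  using poset unfolding poset_on_def by blast
lemma le_trans: "le a b \<Longrightarrow> le b c \<Longrightarrow> le a c"
  using poset unfolding poset_on_def by blast
lemma strict_less: "strict le a b \<Longrightarrow> a < b"
  using natl unfolding natural_labeling_def by blast

lemma L_iff: "\<pi> \<in> lin_ext n le \<longleftrightarrow>
  length \<pi> = n \<and> distinct \<pi> \<and> set \<pi> = {1..n} \<and> sorted_wrt (R le) \<pi>"
proof
  assume a: "\<pi> \<in> lin_ext n le"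
  have "R le (\<pi> ! k) (\<pi> ! l)" if "k < l" "l < length \<pi>" for k l
  proof -
    have "length \<pi> = n" and
      h: "\<forall>k l. k < n \<longrightarrow> l < n \<longrightarrow> strict le (\<pi> ! k) (\<pi> ! l) \<longrightarrow> k < l"
      using a unfolding lin_ext_def by auto
    then show ?thesis using that unfolding R_def by (meson less_trans not_less_iff_gr_or_eq)
  qed
  then have "sorted_wrt (R le) \<pi>"
    unfolding sorted_wrt_iff_nth_less by blast
  then show "length \<pi> = n \<and> distinct \<pi> \<and> set \<pi> = {1..n} \<and> sorted_wrt (R le) \<pi>"
    using a unfolding lin_ext_def by simp
next
  assume a: "length \<pi> = n \<and> distinct \<pi> \<and> set \<pi> = {1..n} \<and> sorted_wrt (R le) \<pi>"
  have "k < l" if "k < n" "l < n" "strict le (\<pi> ! k) (\<pi> ! l)" for k l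
  proof (rule ccontr)
    assume "\<not> k < l"
    then consider "k = l" | "l < k" by linarith
    then show False
    proof cases
      case 1 then show ?thesis using that unfolding strict_def by simp
    next
      case 2 then show ?thesis using a that unfolding sorted_wrt_iff_nth_less R_def by auto
    qed
  qed
  then show "\<pi> \<in> lin_ext n le" using a unfolding lin_ext_def by auto
qed

lemma L_split:
  assumes "\<sigma> \<in> lin_ext n le" "i \<in> {1..n}"
  obtains p s where "\<sigma> = p @ i # s"
proof -
  have "i \<in> set \<sigma>" using assms L_iff by simp
  then show ?thesis using split_list that by metis
qed

lemma hatd_eq:
  assumes "\<sigma> \<in> lin_ext n le" "\<sigma> = p @ i # s"
  shows "hatd n le i \<sigma> = p @ bubble le i s"
proof -
  have "distinct \<sigma>" "length \<sigma> = n" using assms(1) L_iff by simp_all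
  then show ?thesis using assms(2) hatd_split by simp
qed

lemma hatd_L:
  assumes "\<sigma> \<in> lin_ext n le" "i \<in> {1..n}"
  shows "hatd n le i \<sigma> \<in> lin_ext n le"
proof -
  obtain p s where s: "\<sigma> = p @ i # s" using L_split assms by metis
  have h: "hatd n le i \<sigma> = p @ bubble le i s" using hatd_eq assms(1) s by simp
  have L: "length \<sigma> = n" "distinct \<sigma>" "set \<sigma> = {1..n}" "sorted_wrt (R le) \<sigma>"
    using assms(1) L_iff by auto
  have "sorted_wrt (R le) (i # s)" using L(4) s by (simp add: sorted_wrt_append)
  then have "sorted_wrt (R le) (bubble le i s)" by (rule bubble_sorted)
  moreover have "distinct (bubble le i s)" using L(2) s bubble_distinct by auto
  ultimately show ?thesis unfolding L_iff h using L s
    by (auto simp: bubble_set bubble_length sorted_wrt_append)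
qed

lemma hatd_filter:
  assumes "\<sigma> \<in> lin_ext n le" "j \<in> B" "j \<in> {1..n}" "\<forall>a b. a \<in> B \<longrightarrow> le a b \<longrightarrow> b \<in> B"
  shows "filter (\<lambda>x. x \<notin> B) (hatd n le j \<sigma>) = filter (\<lambda>x. x \<notin> B) \<sigma>"
proof -
  obtain p s where s: "\<sigma> = p @ j # s" using L_split assms by metis
  have h: "hatd n le j \<sigma> = p @ bubble le j s" using hatd_eq assms(1) s by simp
  have L: "distinct \<sigma>" "sorted_wrt (R le) \<sigma>"
    using assms(1) L_iff by auto
  have "sorted_wrt (R le) (j # s)" using L(2) s by (simp add: sorted_wrt_append)
  moreover have "distinct (j # s)" using L(1) s by auto
  ultimately have "filter (\<lambda>x. x \<notin> B) (bubble le j s) = filter (\<lambda>x. x \<notin> B) s"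
    using bubble_filter[OF assms(4)] assms(2) by blast
  then show ?thesis using h s assms(2) by simp
qed

lemma chain_aux:
  "\<forall>i. a - i = m \<longrightarrow> le i a \<longrightarrow> le i b \<longrightarrow> comparable le a b"
proof (induction m rule: less_induct)
  case (less m)
  show ?case
  proof (intro allI impI)
    fix i assume m: "a - i = m" and ia: "le i a" and ib: "le i b"
    show "comparable le a b"
    proof (cases "i = a \<or> i = b")
      case True
      then show ?thesis using ia ib le_dom le_refl unfolding comparable_def by blast
    next
      case False
      have cov: "\<exists>c. covers le i c \<and> le c x" if ix: "le i x" "i \<noteq> x" for x
      proof -
        let ?C = "{k. strict le i k \<and> le k x}"
        have fin: "finite ?C" by (rule finite_subset[of _ "{1..n}"]) (auto dest: le_dom)
        have ne: "x \<in> ?C" using ix le_dom le_refl unfolding strict_def by auto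
        define c where "c = Min ?C"
        have cC: "c \<in> ?C" using fin ne c_def Min_in by blast
        have cmin: "\<forall>k\<in>?C. c \<le> k" using fin c_def by simp
        have "covers le i c"
          unfolding covers_def
        proof
          show "strict le i c" using cC by simp
          show "\<not> (\<exists>k. strict le i k \<and> strict le k c)"
          proof
            assume "\<exists>k. strict le i k \<and> strict le k c"
            then obtain k where k: "strict le i k" "strict le k c" by blast
            then have "k \<in> ?C" using cC le_trans unfolding strict_def by auto
            then show False using cmin strict_less[OF k(2)] by force
          qed
        qed
        then show ?thesis using cC by blast
      qed
      obtain c where c: "covers le i c" "le c a" using cov ia False by blast
      obtain c' where c': "covers le i c'" "le c' b" using cov ib False by blast
      have "i \<in> {1..n}" using ia le_dom by blast
      then have "c = c'" using forest c c' unfolding rooted_forest_def by blast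
      have "i < c" using c(1) strict_less unfolding covers_def by blast
      moreover have "c \<le> a" using c(2) strict_less unfolding strict_def by force
      ultimately have "a - c < m" using m by linarith
      then show ?thesis using less c c' \<open>c = c'\<close> by blast
    qed
  qed
qed

lemma chain: "le i a \<Longrightarrow> le i b \<Longrightarrow> comparable le a b"
  using chain_aux by blast

end



context FF begin

lemma upA: "\<forall>a b. a \<in> {k. le i k} \<longrightarrow> le a b \<longrightarrow> b \<in> {k. le i k}"
  using le_trans by blast

lemma finA: "finite {k. le i k}"
  by (rule finite_subset[of _ "{1..n}"]) (auto dest: le_dom)

lemma iter_L: "\<sigma> \<in> lin_ext n le \<Longrightarrow> i \<in> {1..n} \<Longrightarrow> (hatd n le i ^^ k) \<sigma> \<in> lin_ext n le"
  by (induction k) (auto simp: hatd_L)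

lemma iter_filter:
  assumes "\<sigma> \<in> lin_ext n le" "i \<in> B" "i \<in> {1..n}" "\<forall>a b. a \<in> B \<longrightarrow> le a b \<longrightarrow> b \<in> B"
  shows "filter (\<lambda>x. x \<notin> B) ((hatd n le i ^^ k) \<sigma>) = filter (\<lambda>x. x \<notin> B) \<sigma>"
proof (induction k)
  case 0 then show ?case by simp
next
  case (Suc k)
  have "(hatd n le i ^^ k) \<sigma> \<in> lin_ext n le" using iter_L assms by blast
  then show ?case using hatd_filter[of _ i B] assms Suc by simp
qed

lemma iter_x:
  assumes "\<forall>\<pi>\<in>lin_ext n le. x (hatd n le i \<pi>) = x \<pi>" "\<sigma> \<in> lin_ext n le" "i \<in> {1..n}"
  shows "x ((hatd n le i ^^ k) \<sigma>) = x \<sigma>"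
proof (induction k)
  case 0 then show ?case by simp
next
  case (Suc k)
  have "(hatd n le i ^^ k) \<sigma> \<in> lin_ext n le" using iter_L assms by blast
  then show ?case using assms Suc by simp
qed

lemma U_step:
  assumes sL: "\<sigma> \<in> lin_ext n le" and i: "i \<in> {1..n}" and sp: "\<sigma> = \<rho> @ t"
    and tA: "set t \<subseteq> {k. le i k}" and lt: "length t < card {k. le i k}"
  shows "\<exists>\<rho>' c. hatd n le i \<sigma> = \<rho>' @ c # t \<and> le i c"
proof -
  have L: "length \<sigma> = n" "distinct \<sigma>" "set \<sigma> = {1..n}" "sorted_wrt (R le) \<sigma>"
    using sL L_iff by auto
  have it: "i \<notin> set t"
  proof
    assume iin: "i \<in> set t"
    have "{k. le i k} \<subseteq> set t"
    proof
      fix a assume "a \<in> {k. le i k}"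
      then have a: "le i a" by simp
      show "a \<in> set t"
      proof (cases "a = i")
        case True then show ?thesis using iin by simp
      next
        case False
        have "a \<in> set \<sigma>" using a le_dom L(3) by blast
        moreover have "a \<notin> set \<rho>"
        proof
          assume "a \<in> set \<rho>"
          then have "R le a i" using L(4) sp iin by (auto simp: sorted_wrt_append)
          then show False using a False unfolding R_def strict_def by auto
        qed
        ultimately show ?thesis using sp by auto
      qed
    qed
    then have "card {k. le i k} \<le> card (set t)" by (simp add: card_mono)
    also have "\<dots> \<le> length t" by (rule card_length)
    finally show False using lt by simp
  qed
  have "i \<in> set \<rho>" using i L(3) sp it by auto
  then obtain p s1 where rs: "\<rho> = p @ i # s1" using split_list by metis
  have s2: "\<sigma> = p @ i # (s1 @ t)" using sp rs by simp
  have h: "hatd n le i \<sigma> = p @ bubble le i (s1 @ t)" using hatd_eq[OF sL s2] .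
  define c where "c = last (bubble le i s1)"
  have sor: "sorted_wrt (R le) (i # s1)" using L(4) s2 by (simp add: sorted_wrt_append)
  have dis: "distinct (i # s1)" using L(2) s2 by simp
  have "c = i \<or> le i c" using bubble_last[of le i s1, OF le_trans sor dis] c_def by auto
  then have ic: "le i c" using le_refl i by auto
  have "\<forall>x\<in>set (c # t). \<forall>y\<in>set (c # t). comparable le x y"
  proof (intro ballI)
    fix x y assume "x \<in> set (c # t)" "y \<in> set (c # t)"
    then have "le i x" "le i y" using tA ic by auto
    then show "comparable le x y" by (rule chain)
  qed
  then have "bubble le c t = c # t" by (rule bubble_chain)
  then have "hatd n le i \<sigma> = (p @ butlast (bubble le i s1)) @ c # t"
    using h bubble_append c_def by simp
  then show ?thesis using ic by blast
qed

lemma U_iter: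
  assumes sL: "\<sigma> \<in> lin_ext n le" and i: "i \<in> {1..n}"
  shows "k \<le> card {k. le i k} \<Longrightarrow>
    \<exists>\<rho> t. (hatd n le i ^^ k) \<sigma> = \<rho> @ t \<and> set t \<subseteq> {k. le i k} \<and> length t = k"
proof (induction k)
  case 0 then show ?case by auto
next
  case (Suc k)
  then obtain \<rho> t where rt: "(hatd n le i ^^ k) \<sigma> = \<rho> @ t" "set t \<subseteq> {k. le i k}" "length t = k"
    by auto
  have "(hatd n le i ^^ k) \<sigma> \<in> lin_ext n le" using iter_L sL i by blast
  then obtain \<rho>' c where "hatd n le i ((hatd n le i ^^ k) \<sigma>) = \<rho>' @ c # t" "le i c"
    using U_step[OF _ i rt(1) rt(2)] rt(3) Suc.prems by fastforce
  then show ?case using rt by (intro exI[of _ \<rho>'] exI[of _ "c # t"]) auto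
qed

lemma U_full:
  assumes sL: "\<sigma> \<in> lin_ext n le" and i: "i \<in> {1..n}"
  shows "(hatd n le i ^^ card {k. le i k}) \<sigma> =
           filter (\<lambda>x. x \<notin> {k. le i k}) \<sigma> @ sorted_list_of_set {k. le i k}"
proof -
  let ?A = "{k. le i k}"
  let ?\<tau> = "(hatd n le i ^^ card ?A) \<sigma>"
  obtain \<rho> t where rt: "?\<tau> = \<rho> @ t" "set t \<subseteq> ?A" "length t = card ?A"
    using U_iter[OF sL i] by blast
  have tL: "?\<tau> \<in> lin_ext n le" using iter_L sL i by blast
  then have tL2: "distinct ?\<tau>" "sorted_wrt (R le) ?\<tau>" using L_iff by auto
  have dt: "distinct t" and disj: "set \<rho> \<inter> set t = {}" using tL2(1) rt(1) by auto
  have "card (set t) = card ?A" using distinct_card[OF dt] rt(3) by simp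
  then have tA: "set t = ?A" using card_subset_eq[OF finA rt(2)] by simp
  have f1: "filter (\<lambda>x. x \<notin> ?A) ?\<tau> = \<rho>"
    using rt(1) tA disj by (auto intro: filter_True)
  have f2: "filter (\<lambda>x. x \<notin> ?A) ?\<tau> = filter (\<lambda>x. x \<notin> ?A) \<sigma>"
    using iter_filter[OF sL _ i upA] le_refl i by blast
  have st: "sorted_wrt (R le) t" using tL2(2) rt(1) by (simp add: sorted_wrt_append)
  have "sorted_wrt (<) t"
    unfolding sorted_wrt_iff_nth_less
  proof (intro allI impI)
    fix k l assume kl: "k < l" "l < length t"
    have r: "R le (t ! k) (t ! l)" using st kl unfolding sorted_wrt_iff_nth_less by blast
    have ne: "t ! k \<noteq> t ! l" using dt kl nth_eq_iff_index_eq by fastforce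
    have "t ! k \<in> ?A" "t ! l \<in> ?A" using kl tA nth_mem by (metis order.strict_trans)+
    then have "comparable le (t ! k) (t ! l)" using chain by simp
    then have "le (t ! k) (t ! l)" using comp_R_le r ne by blast
    then show "t ! k < t ! l" using strict_less ne unfolding strict_def by blast
  qed
  then have "t = sorted_list_of_set ?A"
    using sorted_distinct_set_unique[of t "sorted_list_of_set ?A"] tA finA
    by (simp add: strict_sorted_iff)
  then show ?thesis using rt(1) f1 f2 by simp
qed

lemma upper_step:
  assumes x: "\<forall>\<pi>\<in>lin_ext n le. x (hatd n le i \<pi>) = x \<pi>" and i: "i \<in> {1..n}" and ij: "le i j"
  shows "\<forall>\<pi>\<in>lin_ext n le. x (hatd n le j \<pi>) = x \<pi>"
proof
  fix \<pi> assume pL: "\<pi> \<in> lin_ext n le"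
  let ?A = "{k. le i k}"
  let ?y = "hatd n le i ^^ card ?A"
  have j: "j \<in> {1..n}" using ij le_dom by blast
  have hL: "hatd n le j \<pi> \<in> lin_ext n le" using hatd_L pL j by blast
  have "x (hatd n le j \<pi>) = x (?y (hatd n le j \<pi>))" using iter_x[OF x hL i] by simp
  also have "?y (hatd n le j \<pi>) = filter (\<lambda>x. x \<notin> ?A) (hatd n le j \<pi>) @ sorted_list_of_set ?A"
    using U_full[OF hL i] .
  also have "filter (\<lambda>x. x \<notin> ?A) (hatd n le j \<pi>) = filter (\<lambda>x. x \<notin> ?A) \<pi>"
    using hatd_filter[OF pL _ j upA] ij by simp
  also have "filter (\<lambda>x. x \<notin> ?A) \<pi> @ sorted_list_of_set ?A = ?y \<pi>"
    using U_full[OF pL i] by simp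
  also have "x (?y \<pi>) = x \<pi>" using iter_x[OF x pL i] .
  finally show "x (hatd n le j \<pi>) = x \<pi>" .
qed

end



lemma fold_in_M:
  "f \<in> hatd_monoid n le \<Longrightarrow> set ss \<subseteq> {1..n} \<Longrightarrow>
   (\<lambda>\<sigma>. fold (hatd n le) ss (f \<sigma>)) \<in> hatd_monoid n le"
proof (induction ss arbitrary: f)
  case Nil then show ?case by simp
next
  case (Cons i ss)
  have "hatd n le i \<circ> f \<in> hatd_monoid n le" using Cons.prems by (auto intro: hatd_monoid.stepI)
  moreover have "set ss \<subseteq> {1..n}" using Cons.prems by simp
  ultimately have "(\<lambda>\<sigma>. fold (hatd n le) ss ((hatd n le i \<circ> f) \<sigma>)) \<in> hatd_monoid n le"
    using Cons.IH by blast
  then show ?case by (simp add: comp_def)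
qed

lemma fold_bubble_set: "set (fold (bubble le) ss t) = set ss \<union> set t"
  by (induction ss arbitrary: t) (auto simp: bubble_set)

lemma rfactor_spec:
  assumes "V \<noteq> {}"
  shows "(\<forall>v\<in>V. suffix (THE w. (\<forall>v\<in>V. suffix w v) \<and>
      (\<forall>w'. (\<forall>v\<in>V. suffix w' v) \<longrightarrow> length w' \<le> length w)) v) \<and>
    (\<forall>w'. (\<forall>v\<in>V. suffix w' v) \<longrightarrow> length w' \<le> length (THE w. (\<forall>v\<in>V. suffix w v) \<and>
      (\<forall>w'. (\<forall>v\<in>V. suffix w' v) \<longrightarrow> length w' \<le> length w)))"
proof -
  obtain v0 where v0: "v0 \<in> V" using assms by blast
  let ?P = "\<lambda>w. (\<forall>v\<in>V. suffix w v) \<and> (\<forall>w'. (\<forall>v\<in>V. suffix w' v) \<longrightarrow> length w' \<le> length w)"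
  obtain m where m: "(\<exists>w. (\<forall>v\<in>V. suffix w v) \<and> length w = m)"
     "\<forall>y. (\<exists>w. (\<forall>v\<in>V. suffix w v) \<and> length w = y) \<longrightarrow> y \<le> m"
  proof -
    have "\<exists>x. (\<exists>w. (\<forall>v\<in>V. suffix w v) \<and> length w = x) \<and>
       (\<forall>y. (\<exists>w. (\<forall>v\<in>V. suffix w v) \<and> length w = y) \<longrightarrow> y \<le> x)"
    proof (rule Nat.ex_has_greatest_nat[of _ 0 "length v0"])
      show "\<exists>w. (\<forall>v\<in>V. suffix w v) \<and> length w = 0" by (intro exI[of _ "[]"]) auto
      show "\<forall>y. (\<exists>w. (\<forall>v\<in>V. suffix w v) \<and> length w = y) \<longrightarrow> y \<le> length v0"
        using v0 suffix_length_le by blast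
    qed
    then show ?thesis using that by blast
  qed
  then obtain w where w: "\<forall>v\<in>V. suffix w v" "length w = m" by blast
  have Pw: "?P w" using w m by auto
  have uniq: "w' = w" if "?P w'" for w'
  proof -
    have "length w' = length w" using that Pw by (meson le_antisym)
    moreover have "suffix w' v0" "suffix w v0" using that Pw v0 by auto
    ultimately show ?thesis by (metis suffix_length_suffix order_refl suffix_order.antisym)
  qed
  have "?P (THE w. ?P w)" using theI[of ?P w] Pw uniq by blast
  then show ?thesis by blast
qed

context FF begin

lemma E_step:
  assumes sL: "\<sigma> \<in> lin_ext n le" and sp: "\<sigma> = \<rho> @ t" and i: "i \<in> {1..n}"
    and it: "i \<notin> set t" and anc: "\<forall>a. strict le i a \<longrightarrow> a \<in> set t"
  shows "hatd n le i \<sigma> = filter (\<lambda>x. x \<noteq> i) \<rho> @ bubble le i t"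
proof -
  have L: "length \<sigma> = n" "distinct \<sigma>" "set \<sigma> = {1..n}" "sorted_wrt (R le) \<sigma>"
    using sL L_iff by auto
  have "i \<in> set \<rho>" using i L(3) sp it by auto
  then obtain p s1 where rs: "\<rho> = p @ i # s1" using split_list by metis
  have s2: "\<sigma> = p @ i # (s1 @ t)" using sp rs by simp
  have h: "hatd n le i \<sigma> = p @ bubble le i (s1 @ t)" using hatd_eq[OF sL s2] .
  have nc: "\<forall>y\<in>set s1. \<not> comparable le i y"
  proof
    fix y assume y: "y \<in> set s1"
    have r: "R le i y" using L(4) s2 y by (simp add: sorted_wrt_append)
    have ne: "i \<noteq> y" using L(2) s2 y by auto
    have yt: "y \<notin> set t" using L(2) s2 y by auto
    show "\<not> comparable le i y"
    proof
      assume "comparable le i y"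
      then have "le i y" using comp_R_le r ne by blast
      then show False using anc ne yt unfolding strict_def by blast
    qed
  qed
  have "bubble le i s1 = s1 @ [i]" using bubble_noncomp[OF nc] .
  then have "hatd n le i \<sigma> = (p @ s1) @ bubble le i t" using h bubble_append by simp
  moreover have "filter (\<lambda>x. x \<noteq> i) \<rho> = p @ s1"
  proof -
    have "i \<notin> set p" "i \<notin> set s1" using L(2) s2 by auto
    then have "filter (\<lambda>x. x \<noteq> i) p = p" "filter (\<lambda>x. x \<noteq> i) s1 = s1"
      by (auto intro: filter_True)
    then show ?thesis using rs by simp
  qed
  ultimately show ?thesis by simp
qed

lemma fold_L: "\<sigma> \<in> lin_ext n le \<Longrightarrow> set ss \<subseteq> {1..n} \<Longrightarrow> fold (hatd n le) ss \<sigma> \<in> lin_ext n le"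
  by (induction ss arbitrary: \<sigma>) (auto simp: hatd_L)

lemma fold_x:
  "(\<forall>i\<in>set ss. \<forall>\<pi>\<in>lin_ext n le. x (hatd n le i \<pi>) = x \<pi>) \<Longrightarrow> \<sigma> \<in> lin_ext n le \<Longrightarrow>
   set ss \<subseteq> {1..n} \<Longrightarrow> x (fold (hatd n le) ss \<sigma>) = x \<sigma>"
  by (induction ss arbitrary: \<sigma>) (auto simp: hatd_L)

lemma E_fold:
  "\<sigma> \<in> lin_ext n le \<Longrightarrow> \<sigma> = \<rho> @ t \<Longrightarrow> set ss \<subseteq> {1..n} \<Longrightarrow> set ss \<inter> set t = {} \<Longrightarrow>
   distinct ss \<Longrightarrow> sorted_wrt (>) ss \<Longrightarrow>
   (\<forall>i\<in>set ss. \<forall>a. strict le i a \<longrightarrow> a \<in> set t \<or> (a \<in> set ss \<and> i < a)) \<Longrightarrow>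
   fold (hatd n le) ss \<sigma> = filter (\<lambda>x. x \<notin> set ss) \<rho> @ fold (bubble le) ss t"
proof (induction ss arbitrary: \<sigma> \<rho> t)
  case Nil then show ?case by simp
next
  case (Cons i ss)
  have i: "i \<in> {1..n}" and it: "i \<notin> set t" using Cons.prems by auto
  have anc: "\<forall>a. strict le i a \<longrightarrow> a \<in> set t"
  proof (intro allI impI)
    fix a assume a: "strict le i a"
    have "i < a" using strict_less a by blast
    moreover have "\<forall>b\<in>set ss. b < i" using Cons.prems(6) by simp
    ultimately show "a \<in> set t" using Cons.prems(7) a by force
  qed
  have h: "hatd n le i \<sigma> = filter (\<lambda>x. x \<noteq> i) \<rho> @ bubble le i t"
    using E_step[OF Cons.prems(1,2) i it anc] .
  have hL: "hatd n le i \<sigma> \<in> lin_ext n le" using hatd_L Cons.prems(1) i by blast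
  have "fold (hatd n le) ss (hatd n le i \<sigma>) =
        filter (\<lambda>x. x \<notin> set ss) (filter (\<lambda>x. x \<noteq> i) \<rho>) @ fold (bubble le) ss (bubble le i t)"
  proof (rule Cons.IH[OF hL h])
    show "set ss \<subseteq> {1..n}" using Cons.prems by simp
    show "set ss \<inter> set (bubble le i t) = {}" using Cons.prems by (auto simp: bubble_set)
    show "distinct ss" using Cons.prems by simp
    show "sorted_wrt (>) ss" using Cons.prems by simp
    show "\<forall>j\<in>set ss. \<forall>a. strict le j a \<longrightarrow> a \<in> set (bubble le i t) \<or> (a \<in> set ss \<and> j < a)"
      using Cons.prems(7) by (auto simp: bubble_set)
  qed
  then show ?case by (simp add: conj_commute)
qed

end



context FF begin

lemma L_nonempty: "[1..<Suc n] \<in> lin_ext n le"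
proof -
  have "sorted_wrt (<) [1..<Suc n]" using strict_sorted_iff sorted_upt distinct_upt by blast
  then have "sorted_wrt (R le) [1..<Suc n]"
    by (rule sorted_wrt_mono_rel[rotated]) (auto simp: R_def dest: strict_less)
  then show ?thesis unfolding L_iff by auto
qed

lemma main:
  shows "upper_set n le (I_set n le x) \<and>
         (\<exists>e\<in>hatd_monoid n le. idempotent_on (lin_ext n le) e \<and> I_set n le x = Rfactor n le e)"
proof -
  let ?L = "lin_ext n le"
  define S where "S = I_set n le x"
  have Sd: "j \<in> S \<longleftrightarrow> j \<in> {1..n} \<and> (\<forall>\<pi>\<in>?L. x (hatd n le j \<pi>) = x \<pi>)" for j
    unfolding S_def I_set_def by simp
  have Sn: "S \<subseteq> {1..n}" using Sd by blast
  have finS: "finite S" using Sn finite_subset by blast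
  have up: "b \<in> S" if "a \<in> S" "le a b" for a b
  proof -
    have "b \<in> {1..n}" using that le_dom by blast
    then show ?thesis using upper_step[of x a b] that Sd by blast
  qed
  have upS: "upper_set n le S" unfolding upper_set_def using Sn up by blast
  define ss where "ss = rev (sorted_list_of_set S)"
  have ssS: "set ss = S" using finS ss_def by simp
  have ssd: "distinct ss" using ss_def by simp
  have sss: "sorted_wrt (>) ss" unfolding ss_def sorted_wrt_rev
    using strict_sorted_list_of_set by simp
  define e where "e = (\<lambda>\<sigma>. fold (hatd n le) ss \<sigma>)"
  define u where "u = fold (bubble le) ss []"
  have uS: "set u = S" using fold_bubble_set[of le ss "[]"] ssS u_def by simp
  have eM: "e \<in> hatd_monoid n le"
    using fold_in_M[OF hatd_monoid.idI, of ss] ssS Sn e_def by simp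
  have eL: "e \<sigma> \<in> ?L" if "\<sigma> \<in> ?L" for \<sigma>
    using fold_L that ssS Sn e_def by simp
  have ef: "e \<sigma> = filter (\<lambda>x. x \<notin> S) \<sigma> @ u" if "\<sigma> \<in> ?L" for \<sigma>
  proof -
    have "fold (hatd n le) ss \<sigma> = filter (\<lambda>x. x \<notin> set ss) \<sigma> @ fold (bubble le) ss []"
    proof (rule E_fold[OF that])
      show "\<sigma> = \<sigma> @ []" by simp
      show "set ss \<subseteq> {1..n}" using ssS Sn by simp
      show "set ss \<inter> set [] = {}" by simp
      show "distinct ss" by (rule ssd)
      show "sorted_wrt (>) ss" by (rule sss)
      show "\<forall>i\<in>set ss. \<forall>a. strict le i a \<longrightarrow> a \<in> set [] \<or> (a \<in> set ss \<and> i < a)"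
        using ssS up strict_less unfolding strict_def by blast
    qed
    then show ?thesis using e_def u_def ssS by simp
  qed
  have idem: "idempotent_on ?L e"
    unfolding idempotent_on_def
  proof
    fix \<sigma> assume sL: "\<sigma> \<in> ?L"
    have "filter (\<lambda>x. x \<notin> S) u = []" using uS by (simp add: filter_empty_conv)
    then have "filter (\<lambda>x. x \<notin> S) (e \<sigma>) = filter (\<lambda>x. x \<notin> S) \<sigma>" using ef[OF sL] by simp
    then show "e (e \<sigma>) = e \<sigma>" using ef[OF sL] ef[OF eL[OF sL]] by simp
  qed
  have xe: "x (e \<sigma>) = x \<sigma>" if "\<sigma> \<in> ?L" for \<sigma>
    using fold_x[of ss x \<sigma>] that ssS Sd Sn e_def by simp
  define \<sigma>0 where "\<sigma>0 = [1..<Suc n]"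
  have s0: "\<sigma>0 \<in> ?L" using L_nonempty \<sigma>0_def by simp
  have Vne: "e ` ?L \<noteq> {}" using s0 by blast
  define w where "w = rfactor n le e"
  have wspec: "(\<forall>v\<in>e ` ?L. suffix w v) \<and> (\<forall>w'. (\<forall>v\<in>e ` ?L. suffix w' v) \<longrightarrow> length w' \<le> length w)"
    using rfactor_spec[OF Vne] unfolding w_def rfactor_def im_def by blast
  have wsuf: "suffix w (e \<sigma>)" if "\<sigma> \<in> ?L" for \<sigma> using wspec that by blast
  have usuf: "suffix u (e \<sigma>)" if "\<sigma> \<in> ?L" for \<sigma> using ef[OF that] by (auto simp: suffix_def)
  have "length u \<le> length w" using wspec usuf by blast
  then have "suffix u w" using suffix_length_suffix[OF usuf[OF s0] wsuf[OF s0]] by blast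
  then have Sw: "S \<subseteq> set w" using uS set_mono_suffix by blast
  have ew: "e \<sigma> = filter (\<lambda>x. x \<notin> set w) \<sigma> @ w" if sL: "\<sigma> \<in> ?L" for \<sigma>
  proof -
    obtain \<alpha> where a: "e \<sigma> = \<alpha> @ w" using wsuf[OF sL] unfolding suffix_def by blast
    have "distinct (e \<sigma>)" using eL[OF sL] L_iff by blast
    then have "set \<alpha> \<inter> set w = {}" using a by simp
    then have f1: "filter (\<lambda>x. x \<notin> set w) (e \<sigma>) = \<alpha>" using a
      by (auto simp: filter_empty_conv intro: filter_True)
    have "filter (\<lambda>x. x \<notin> set w) u = []" using uS Sw by (auto simp: filter_empty_conv)
    then have "filter (\<lambda>x. x \<notin> set w) (e \<sigma>) = filter (\<lambda>x. x \<notin> set w) (filter (\<lambda>x. x \<notin> S) \<sigma>)"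
      using ef[OF sL] by simp
    also have "\<dots> = filter (\<lambda>x. x \<notin> set w) \<sigma>" using Sw by (auto intro: filter_cong)
    finally show ?thesis using f1 a by simp
  qed
  have wn: "set w \<subseteq> {1..n}"
    using set_mono_suffix[OF wsuf[OF s0]] eL[OF s0] L_iff by blast
  have wup: "\<forall>a b. a \<in> set w \<longrightarrow> le a b \<longrightarrow> b \<in> set w"
  proof (intro allI impI)
    fix a b assume a: "a \<in> set w" and ab: "le a b"
    obtain \<alpha> where al: "e \<sigma>0 = \<alpha> @ w" using wsuf[OF s0] unfolding suffix_def by blast
    have L0: "set (e \<sigma>0) = {1..n}" "sorted_wrt (R le) (e \<sigma>0)" using eL[OF s0] L_iff by auto
    have "b \<in> set (e \<sigma>0)" using L0 ab le_dom by blast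
    show "b \<in> set w"
    proof (rule ccontr)
      assume bw: "b \<notin> set w"
      then have "b \<in> set \<alpha>" using al \<open>b \<in> set (e \<sigma>0)\<close> by simp
      then have "R le b a" using L0(2) al a by (auto simp: sorted_wrt_append)
      then have "a = b" using ab unfolding R_def strict_def by blast
      then show False using a bw by simp
    qed
  qed
  have wS: "set w \<subseteq> S"
  proof
    fix j assume j: "j \<in> set w"
    have jn: "j \<in> {1..n}" using j wn by blast
    have "x (hatd n le j \<pi>) = x \<pi>" if pL: "\<pi> \<in> ?L" for \<pi>
    proof -
      have hL: "hatd n le j \<pi> \<in> ?L" using hatd_L pL jn by blast
      have "x (hatd n le j \<pi>) = x (e (hatd n le j \<pi>))" using xe[OF hL] by simp
      also have "e (hatd n le j \<pi>) = filter (\<lambda>x. x \<notin> set w) (hatd n le j \<pi>) @ w" using ew[OF hL] .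
      also have "filter (\<lambda>x. x \<notin> set w) (hatd n le j \<pi>) = filter (\<lambda>x. x \<notin> set w) \<pi>"
        using hatd_filter[OF pL j jn wup] .
      also have "filter (\<lambda>x. x \<notin> set w) \<pi> @ w = e \<pi>" using ew[OF pL] by simp
      also have "x (e \<pi>) = x \<pi>" using xe[OF pL] .
      finally show ?thesis .
    qed
    then show "j \<in> S" using Sd jn by blast
  qed
  have "S = Rfactor n le e" unfolding Rfactor_def w_def[symmetric] using Sw wS by blast
  then show ?thesis using upS eM idem unfolding S_def by blast
qed

end

theorem lemma6p8:
  fixes n :: nat and le :: "nat \<Rightarrow> nat \<Rightarrow> bool" and x :: "nat list \<Rightarrow> nat list"
  assumes "rooted_forest n le"
    and "natural_labeling n le"
    and "x \<in> hatd_monoid n le"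
  shows "upper_set n le (I_set n le x) \<and>
         (\<exists>e\<in>hatd_monoid n le. idempotent_on (lin_ext n le) e \<and> I_set n le x = Rfactor n le e)"
proof -
  interpret FF n le using assms(1,2) by (rule FF.intro)
  show ?thesis by (rule main)
qed



end
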